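(* Let $R$ be a ring. (i) For any nil ideal $I$ of $R$, $R$ is GSWNC if and only if $R/I$ is GSWNC. (ii) $R$ is GSWNC if and only if the Jacobson radical $J(R)$ is nil and $R/J(R)$ is GSWNC.
   Context: All rings are associative with identity. An element $a$ of a ring is strongly weakly nil-clean if there exist an idempotent $e$ and a nilpotent $q$ with $eq = qe$ such that $a = q + e$ or $a = q - e$. A ring is GSWNC if every non-invertible element is strongly weakly nil-clean. *)

theory Defs
  imports "HOL-Algebra.Algebra"
begin

definition nilpotent_elem :: "('a, 'b) ring_scheme \<Rightarrow> 'a \<Rightarrow> bool" where
  "nilpotent_elem R q \<longleftrightarrow> q \<in> carrier R \<and> (\<exists>n::nat. q [^]\<^bsub>R\<^esub> n = \<zero>\<^bsub>R\<^esub>)"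

definition idempotent_elem :: "('a, 'b) ring_scheme \<Rightarrow> 'a \<Rightarrow> bool" where
  "idempotent_elem R e \<longleftrightarrow> e \<in> carrier R \<and> e \<otimes>\<^bsub>R\<^esub> e = e"

definition strongly_weakly_nil_clean :: "('a, 'b) ring_scheme \<Rightarrow> 'a \<Rightarrow> bool" where
  "strongly_weakly_nil_clean R a \<longleftrightarrow>
     (\<exists>e q. idempotent_elem R e \<and> nilpotent_elem R q \<and> e \<otimes>\<^bsub>R\<^esub> q = q \<otimes>\<^bsub>R\<^esub> e \<and>
        (a = q \<oplus>\<^bsub>R\<^esub> e \<or> a = q \<ominus>\<^bsub>R\<^esub> e))"

definition GSWNC :: "('a, 'b) ring_scheme \<Rightarrow> bool" where
  "GSWNC R \<longleftrightarrow> (\<forall>a \<in> carrier R - Units R. strongly_weakly_nil_clean R a)"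

definition nil_set :: "('a, 'b) ring_scheme \<Rightarrow> 'a set \<Rightarrow> bool" where
  "nil_set R I \<longleftrightarrow> (\<forall>x \<in> I. nilpotent_elem R x)"

definition nil_ideal :: "'a set \<Rightarrow> ('a, 'b) ring_scheme \<Rightarrow> bool" where
  "nil_ideal I R \<longleftrightarrow> ideal I R \<and> nil_set R I"

definition left_ideal :: "'a set \<Rightarrow> ('a, 'b) ring_scheme \<Rightarrow> bool" where
  "left_ideal L R \<longleftrightarrow> additive_subgroup L R \<and>
     (\<forall>r \<in> carrier R. \<forall>x \<in> L. r \<otimes>\<^bsub>R\<^esub> x \<in> L)"

definition maximal_left_ideal :: "'a set \<Rightarrow> ('a, 'b) ring_scheme \<Rightarrow> bool" where
  "maximal_left_ideal M R \<longleftrightarrow> left_ideal M R \<and> M \<noteq> carrier R \<and>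
     (\<forall>L. left_ideal L R \<longrightarrow> M \<subseteq> L \<longrightarrow> L = M \<or> L = carrier R)"

text \<open>Jacobson radical: intersection of all maximal left ideals (equal to the whole
  (zero) ring when there are none).\<close>
definition jacobson_radical :: "('a, 'b) ring_scheme \<Rightarrow> 'a set" where
  "jacobson_radical R = {x \<in> carrier R. \<forall>M. maximal_left_ideal M R \<longrightarrow> x \<in> M}"

end

theory Submission imports Defs "HOL-Computational_Algebra.Polynomial" begin

definition nil_sq :: "('c, 'd) ring_scheme \<Rightarrow> 'c \<Rightarrow> bool" where
  "nil_sq R a \<longleftrightarrow> (\<exists>n::nat. (a \<ominus>\<^bsub>R\<^esub> a \<otimes>\<^bsub>R\<^esub> a) [^]\<^bsub>R\<^esub> n = \<zero>\<^bsub>R\<^esub>)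
     \<or> (\<exists>n::nat. (a \<oplus>\<^bsub>R\<^esub> a \<otimes>\<^bsub>R\<^esub> a) [^]\<^bsub>R\<^esub> n = \<zero>\<^bsub>R\<^esub>)"

lemma bezout_pow:
  fixes A B u v :: "'b::comm_ring_1"
  assumes "u*A + v*B = 1"
  shows "\<exists>u' v'. u'*A + v'*B^k = 1"
proof (induct k)
  case 0 show ?case by (rule exI[of _ 0], rule exI[of _ 1]) simp
next
  case (Suc k)
  then obtain u' v' where h: "u'*A + v'*B^k = 1" by blast
  have "(u' + v'*B^k*u)*A + (v'*v)*B^Suc k = u'*A + v'*B^k*(u*A + v*B)"
    by (simp add: algebra_simps)
  also have "\<dots> = 1" using assms h by simp
  finally show ?case by blast
qed

context ring begin

definition iemb :: "int \<Rightarrow> 'a" where "iemb k = [k] \<cdot> \<one>"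

lemma iemb_closed[simp]: "iemb k \<in> carrier R"
  unfolding iemb_def by simp

lemma iemb_add: "iemb (m + n) = iemb m \<oplus> iemb n"
  unfolding iemb_def by (simp add: add.int_pow_mult)

lemma iemb_0[simp]: "iemb 0 = \<zero>" unfolding iemb_def by (simp add: add_pow_int_ge)
lemma iemb_1[simp]: "iemb 1 = \<one>" unfolding iemb_def by simp

lemma iemb_lcomm: "x \<in> carrier R \<Longrightarrow> iemb k \<otimes> x = [k] \<cdot> x"
  unfolding iemb_def by (simp add: add_pow_ldistr_int)
lemma iemb_rcomm: "x \<in> carrier R \<Longrightarrow> x \<otimes> iemb k = [k] \<cdot> x"
  unfolding iemb_def by (simp add: add_pow_rdistr_int)
lemma iemb_comm: "x \<in> carrier R \<Longrightarrow> iemb k \<otimes> x = x \<otimes> iemb k"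
  by (simp add: iemb_lcomm iemb_rcomm)

lemma iemb_mult: "iemb (m * n) = iemb m \<otimes> iemb n"
  unfolding iemb_def by (simp add: add_pow_ldistr_int add.int_pow_pow mult.commute)


lemma foldr_cl: "a \<in> carrier R \<Longrightarrow> foldr (\<lambda>c acc. iemb c \<oplus> a \<otimes> acc) xs \<zero> \<in> carrier R"
  by (induct xs) auto

definition pev :: "'a \<Rightarrow> int poly \<Rightarrow> 'a" where
  "pev a p = foldr (\<lambda>c acc. iemb c \<oplus> a \<otimes> acc) (coeffs p) \<zero>"

lemma pev_pCons: assumes a: "a \<in> carrier R"
  shows "pev a (pCons c p) = iemb c \<oplus> a \<otimes> pev a p"
proof -
  have cl: "pev a p \<in> carrier R" for p
    unfolding pev_def using foldr_cl[OF a] .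
  show ?thesis
    using cl[of p] a unfolding pev_def coeffs_pCons_eq_cCons cCons_def
    by (auto)
qed

lemma pev_closed[simp]: "a \<in> carrier R \<Longrightarrow> pev a p \<in> carrier R"
  unfolding pev_def using foldr_cl .

lemma pev_0[simp]: "pev a 0 = \<zero>" unfolding pev_def by simp

lemma pev_add: assumes a: "a \<in> carrier R" shows "pev a (p + q) = pev a p \<oplus> pev a q"
proof (induct p arbitrary: q rule: pCons_induct)
  case 0 then show ?case using a by simp
next
  case (pCons c p)
  obtain d q' where q: "q = pCons d q'" by (cases q) auto
  have "pev a (pCons c p + pCons d q') = iemb (c+d) \<oplus> a \<otimes> (pev a p \<oplus> pev a q')"
    using pCons a by (simp add: pev_pCons)
  also have "\<dots> = (iemb c \<oplus> a \<otimes> pev a p) \<oplus> (iemb d \<oplus> a \<otimes> pev a q')"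
    using a by (simp add: iemb_add r_distr a_ac)
  finally show ?case unfolding q using a by (simp add: pev_pCons)
qed

lemma pev_smult: assumes a: "a \<in> carrier R" shows "pev a (smult c p) = iemb c \<otimes> pev a p"
proof (induct p rule: pCons_induct)
  case 0 then show ?case using a by simp
next
  case (pCons d p)
  have "pev a (smult c (pCons d p)) = iemb (c*d) \<oplus> a \<otimes> (iemb c \<otimes> pev a p)"
    using pCons a by (simp add: pev_pCons)
  also have "a \<otimes> (iemb c \<otimes> pev a p) = iemb c \<otimes> (a \<otimes> pev a p)"
    using a by (metis iemb_closed iemb_comm m_assoc pev_closed)
  finally show ?case using a by (simp add: pev_pCons iemb_mult r_distr)
qed

lemma pev_mult: assumes a: "a \<in> carrier R" shows "pev a (p * q) = pev a p \<otimes> pev a q"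
proof (induct p rule: pCons_induct)
  case 0 then show ?case using a by simp
next
  case (pCons c p)
  show ?case using pCons a
    by (simp add: pev_pCons pev_add pev_smult l_distr m_assoc)
qed

lemma pev_1[simp]: "a \<in> carrier R \<Longrightarrow> pev a 1 = \<one>"
  using pev_pCons[of a 1 0] by (simp add: one_pCons)

lemma pev_X: "a \<in> carrier R \<Longrightarrow> pev a [:0,1:] = a"
  by (simp add: pev_pCons)

lemma pev_uminus: assumes a: "a \<in> carrier R" shows "pev a (- p) = \<ominus> pev a p"
proof -
  have "pev a (- p) \<oplus> pev a p = \<zero>" using pev_add[OF a, of "-p" p] by simp
  then show ?thesis using a by (metis add.inv_closed add.l_inv_ex add.m_assoc minus_equality pev_closed)
qed

lemma pev_diff: assumes a: "a \<in> carrier R" shows "pev a (p - q) = pev a p \<ominus> pev a q"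
  using pev_add[OF a, of p "-q"] pev_uminus[OF a] by (simp add: minus_eq)

lemma pev_power: assumes a: "a \<in> carrier R" shows "pev a (p ^ n) = pev a p [^] n"
proof (induct n)
  case (Suc n)
  have "pev a (p ^ Suc n) = pev a (p ^ n * p)" by (simp only: power_Suc2)
  then show ?case using Suc a by (simp add: pev_mult)
qed (simp add: a)


lemma lift_sn:
  assumes a: "a \<in> carrier R" and n: "(a \<ominus> a \<otimes> a) [^] (n::nat) = \<zero>"
  shows "\<exists>e q. idempotent_elem R e \<and> nilpotent_elem R q \<and> e \<otimes> q = q \<otimes> e \<and> a = q \<oplus> e"
proof -
  define PX :: "int poly" where "PX = [:0,1:]"
  define PY :: "int poly" where "PY = 1 - PX"
  define N where "N = Suc n"
  have zc: "a \<ominus> a \<otimes> a \<in> carrier R" using a by simp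
  have z: "(a \<ominus> a \<otimes> a) [^] N = \<zero>" unfolding N_def using n zc by (simp add: nat_pow_Suc)
  obtain u v where uv: "u*PX + v*PY^N = 1" using bezout_pow[of 1 PX 1 PY N] by (auto simp: PY_def)
  then have "v*PY^N + u*PX = 1" by (simp add: add.commute)
  then obtain t s where "t*PY^N + s*PX^N = 1"
    using bezout_pow[of v "PY^N" u PX N] by blast
  then have st: "s*PX^N + t*PY^N = 1" by (simp add: add.commute)
  define E where "E = s*PX^N"
  define T where "T = t*PY^n - s*PX^n"
  have E1: "E = 1 - t*PY^N" using st unfolding E_def by (simp add: eq_diff_eq)
  have h1: "E*E = E - s*t*(PX*PY)^N"
  proof -
    have "E*E = E*(1 - t*PY^N)" using E1 by simp
    also have "\<dots> = E - s*t*(PX*PY)^N" unfolding E_def by (simp add: algebra_simps power_mult_distrib)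
    finally show ?thesis .
  qed
  have h2: "PX - E = (PX*PY)*T"
  proof -
    have "PX - E = PX * (E + t*PY^N) - E" using st unfolding E_def by simp
    also have "\<dots> = (PX*PY)*T" unfolding E_def T_def N_def PY_def by (simp add: algebra_simps)
    finally show ?thesis .
  qed
  have pX: "pev a PX = a" unfolding PX_def using a by (rule pev_X)
  have pXY: "pev a (PX*PY) = a \<ominus> a \<otimes> a"
    using a by (simp add: pev_mult pev_diff pX PY_def minus_eq r_distr r_minus)
  define e where "e = pev a E"
  define q where "q = pev a (PX - E)"
  have ec: "e \<in> carrier R" and qc: "q \<in> carrier R" unfolding e_def q_def using a by auto
  have "e \<otimes> e = e"
  proof -
    have "e \<otimes> e = pev a (E*E)" unfolding e_def using a by (simp add: pev_mult)
    also have "\<dots> = e \<ominus> pev a (s*t) \<otimes> (a \<ominus> a \<otimes> a) [^] N"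
      unfolding h1 using a by (simp add: pev_diff pev_mult pev_power pXY e_def)
    also have "\<dots> = e" using z ec a by (simp add: minus_eq)
    finally show ?thesis .
  qed
  then have ide: "idempotent_elem R e" using ec by (simp add: idempotent_elem_def)
  have "q [^] N = \<zero>"
  proof -
    have "q [^] N = pev a ((PX - E)^N)" unfolding q_def using a by (simp add: pev_power)
    also have "\<dots> = (a \<ominus> a \<otimes> a) [^] N \<otimes> pev a T [^] N"
      unfolding h2 power_mult_distrib[of "PX*PY" T] using a by (simp only: pev_power pev_mult pXY)
    also have "\<dots> = \<zero>" using z a by simp
    finally show ?thesis .
  qed
  then have nq: "nilpotent_elem R q" using qc by (auto simp: nilpotent_elem_def)
  have cm: "e \<otimes> q = q \<otimes> e"
    unfolding e_def q_def using a by (simp add: pev_mult[symmetric] mult.commute)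
  have "a = q \<oplus> e"
  proof -
    have "a = pev a ((PX - E) + E)" using pX by simp
    then show ?thesis unfolding q_def e_def using a by (simp only: pev_add)
  qed
  then show ?thesis using ide nq cm by blast
qed


lemma pow_zero_mult:
  assumes "x \<in> carrier R" "y \<in> carrier R" "x \<otimes> y = y \<otimes> x" "x [^] (n::nat) = \<zero>"
  shows "(x \<otimes> y) [^] n = \<zero>"
  using assms by (simp add: pow_mult_distrib)

lemma neg_pow_zero:
  assumes x: "x \<in> carrier R" and n: "x [^] (n::nat) = \<zero>"
  shows "(\<ominus> x) [^] n = \<zero>"
proof -
  have "\<ominus> x = x \<otimes> (\<ominus> \<one>)" using x by (simp add: r_minus)
  moreover have "x \<otimes> (\<ominus> \<one>) = (\<ominus> \<one>) \<otimes> x" using x by (simp add: r_minus l_minus)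
  ultimately show ?thesis using pow_zero_mult[OF x _ _ n, of "\<ominus> \<one>"] by simp
qed

lemma swnc_imp_nil:
  assumes a: "a \<in> carrier R" and sw: "strongly_weakly_nil_clean R a"
  shows "(\<exists>n::nat. (a \<ominus> a \<otimes> a) [^] n = \<zero>) \<or> (\<exists>n::nat. (a \<oplus> a \<otimes> a) [^] n = \<zero>)"
proof -
  obtain e q where ide: "idempotent_elem R e" and nq: "nilpotent_elem R q" and cm: "e \<otimes> q = q \<otimes> e"
    and dis: "a = q \<oplus> e \<or> a = q \<ominus> e"
    using sw unfolding strongly_weakly_nil_clean_def by blast
  have ec: "e \<in> carrier R" and ee: "e \<otimes> e = e" using ide by (auto simp: idempotent_elem_def)
  obtain n where qc: "q \<in> carrier R" and qn: "q [^] (n::nat) = \<zero>" using nq by (auto simp: nilpotent_elem_def)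
  show ?thesis using dis
  proof
    assume aq: "a = q \<oplus> e"
    define c where "c = \<one> \<ominus> q \<ominus> (e \<oplus> e)"
    have cc: "c \<in> carrier R" unfolding c_def using ec qc by simp
    have sq: "(q \<oplus> e) \<otimes> (q \<oplus> e) = q \<otimes> q \<oplus> q \<otimes> e \<oplus> e \<otimes> q \<oplus> e \<otimes> e"
      using ec qc by (algebra, (simp add: a_ac)?)
    have "a \<ominus> a \<otimes> a = (q \<oplus> e) \<ominus> (q \<otimes> q \<oplus> q \<otimes> e \<oplus> q \<otimes> e \<oplus> e)"
      unfolding aq sq cm ee ..
    also have "\<dots> = q \<otimes> c" unfolding c_def using ec qc by (algebra, (simp add: a_ac)?)
    finally have eq1: "a \<ominus> a \<otimes> a = q \<otimes> c" .
    have "q \<otimes> c = q \<ominus> q \<otimes> q \<ominus> (q \<otimes> e \<oplus> q \<otimes> e)" unfolding c_def using ec qc by (algebra, (simp add: a_ac)?)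
    also have "\<dots> = q \<ominus> q \<otimes> q \<ominus> (e \<otimes> q \<oplus> e \<otimes> q)" unfolding cm ..
    also have "\<dots> = c \<otimes> q" unfolding c_def using ec qc by (algebra, (simp add: a_ac)?)
    finally have "q \<otimes> c = c \<otimes> q" .
    then have "(a \<ominus> a \<otimes> a) [^] n = \<zero>" unfolding eq1 using pow_zero_mult[OF qc cc _ qn] by simp
    then show ?thesis by blast
  next
    assume aq: "a = q \<ominus> e"
    define c where "c = \<one> \<oplus> q \<ominus> (e \<oplus> e)"
    have cc: "c \<in> carrier R" unfolding c_def using ec qc by simp
    have sq: "(q \<ominus> e) \<otimes> (q \<ominus> e) = q \<otimes> q \<ominus> q \<otimes> e \<ominus> e \<otimes> q \<oplus> e \<otimes> e"
      using ec qc by (algebra, (simp add: a_ac)?)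
    have "a \<oplus> a \<otimes> a = (q \<ominus> e) \<oplus> (q \<otimes> q \<ominus> q \<otimes> e \<ominus> q \<otimes> e \<oplus> e)"
      unfolding aq sq cm ee ..
    also have "\<dots> = q \<otimes> c" unfolding c_def using ec qc by (algebra, (simp add: a_ac)?)
    finally have eq1: "a \<oplus> a \<otimes> a = q \<otimes> c" .
    have "q \<otimes> c = q \<oplus> q \<otimes> q \<ominus> (q \<otimes> e \<oplus> q \<otimes> e)" unfolding c_def using ec qc by (algebra, (simp add: a_ac)?)
    also have "\<dots> = q \<oplus> q \<otimes> q \<ominus> (e \<otimes> q \<oplus> e \<otimes> q)" unfolding cm ..
    also have "\<dots> = c \<otimes> q" unfolding c_def using ec qc by (algebra, (simp add: a_ac)?)
    finally have "q \<otimes> c = c \<otimes> q" .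
    then have "(a \<oplus> a \<otimes> a) [^] n = \<zero>" unfolding eq1 using pow_zero_mult[OF qc cc _ qn] by simp
    then show ?thesis by blast
  qed
qed

lemma nil_imp_swnc:
  assumes a: "a \<in> carrier R"
    and h: "(\<exists>n::nat. (a \<ominus> a \<otimes> a) [^] n = \<zero>) \<or> (\<exists>n::nat. (a \<oplus> a \<otimes> a) [^] n = \<zero>)"
  shows "strongly_weakly_nil_clean R a"
  using h
proof
  assume "\<exists>n::nat. (a \<ominus> a \<otimes> a) [^] n = \<zero>"
  then obtain n where "(a \<ominus> a \<otimes> a) [^] (n::nat) = \<zero>" by blast
  from lift_sn[OF a this] show ?thesis unfolding strongly_weakly_nil_clean_def by blast
next
  assume "\<exists>n::nat. (a \<oplus> a \<otimes> a) [^] n = \<zero>"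
  then obtain n where n: "(a \<oplus> a \<otimes> a) [^] (n::nat) = \<zero>" by blast
  have bc: "\<ominus> a \<in> carrier R" using a by simp
  have "\<ominus> a \<ominus> (\<ominus> a) \<otimes> (\<ominus> a) = \<ominus> (a \<oplus> a \<otimes> a)" using a by (algebra, (simp add: a_ac)?)
  then have "(\<ominus> a \<ominus> (\<ominus> a) \<otimes> (\<ominus> a)) [^] n = \<zero>" using neg_pow_zero[OF _ n] a by simp
  from lift_sn[OF bc this] obtain e q where ide: "idempotent_elem R e" and nq: "nilpotent_elem R q"
    and cm: "e \<otimes> q = q \<otimes> e" and eq: "\<ominus> a = q \<oplus> e" by blast
  have ec: "e \<in> carrier R" using ide by (auto simp: idempotent_elem_def)
  obtain m where qc: "q \<in> carrier R" and qm: "q [^] (m::nat) = \<zero>" using nq by (auto simp: nilpotent_elem_def)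
  have nq': "nilpotent_elem R (\<ominus> q)" using neg_pow_zero[OF qc qm] qc by (auto simp: nilpotent_elem_def)
  have cm': "e \<otimes> (\<ominus> q) = (\<ominus> q) \<otimes> e" using cm ec qc by (simp add: r_minus l_minus)
  have "a = \<ominus> (\<ominus> a)" using a by simp
  also have "\<dots> = (\<ominus> q) \<ominus> e" unfolding eq using ec qc by (algebra, (simp add: a_ac)?)
  finally show ?thesis unfolding strongly_weakly_nil_clean_def using ide nq' cm' by blast
qed

lemma swnc_iff:
  "a \<in> carrier R \<Longrightarrow> strongly_weakly_nil_clean R a \<longleftrightarrow>
     ((\<exists>n::nat. (a \<ominus> a \<otimes> a) [^] n = \<zero>) \<or> (\<exists>n::nat. (a \<oplus> a \<otimes> a) [^] n = \<zero>))"
  using swnc_imp_nil nil_imp_swnc by blast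


subsection \<open>Left ideals and the Jacobson radical\<close>

lemma left_idealI:
  assumes "L \<subseteq> carrier R" "\<zero> \<in> L" "\<And>x y. x \<in> L \<Longrightarrow> y \<in> L \<Longrightarrow> x \<oplus> y \<in> L"
    "\<And>x. x \<in> L \<Longrightarrow> \<ominus> x \<in> L" "\<And>r x. r \<in> carrier R \<Longrightarrow> x \<in> L \<Longrightarrow> r \<otimes> x \<in> L"
  shows "left_ideal L R"
  unfolding left_ideal_def
  using assms by (auto intro!: additive_subgroupI add.subgroupI)

lemma left_idealD:
  assumes "left_ideal L R"
  shows "L \<subseteq> carrier R" "\<zero> \<in> L" "\<And>x y. x \<in> L \<Longrightarrow> y \<in> L \<Longrightarrow> x \<oplus> y \<in> L"
    "\<And>x. x \<in> L \<Longrightarrow> \<ominus> x \<in> L" "\<And>r x. r \<in> carrier R \<Longrightarrow> x \<in> L \<Longrightarrow> r \<otimes> x \<in> L"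
  using assms unfolding left_ideal_def
  by (auto simp: additive_subgroup.a_subset additive_subgroup.zero_closed
      additive_subgroup.a_closed additive_subgroup.a_inv_closed)

lemma left_ideal_one:
  assumes "left_ideal L R" "\<one> \<in> L" shows "L = carrier R"
  using left_idealD[OF assms(1)] assms(2) by (metis r_one subsetI subset_antisym)

lemma exists_maximal_left_ideal:
  assumes L0: "left_ideal L0 R" and n1: "\<one> \<notin> L0"
  shows "\<exists>M. maximal_left_ideal M R \<and> L0 \<subseteq> M"
proof -
  define A where "A = {L. left_ideal L R \<and> L0 \<subseteq> L \<and> \<one> \<notin> L}"
  have "\<exists>M\<in>A. \<forall>K\<in>A. M \<subseteq> K \<longrightarrow> K = M"
  proof (rule subset_Zorn_nonempty)
    show "A \<noteq> {}" using L0 n1 unfolding A_def by blast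
  next
    fix C assume Cne: "C \<noteq> {}" and ch: "subset.chain A C"
    have CA: "C \<subseteq> A" and cmp: "\<And>K K2. K \<in> C \<Longrightarrow> K2 \<in> C \<Longrightarrow> K \<subseteq> K2 \<or> K2 \<subseteq> K"
      using ch unfolding subset_chain_def by auto
    have li: "\<And>K. K \<in> C \<Longrightarrow> left_ideal K R" using CA unfolding A_def by auto
    obtain K0 where K0: "K0 \<in> C" using Cne by blast
    have "left_ideal (\<Union>C) R"
    proof (rule left_idealI)
      show "\<Union>C \<subseteq> carrier R" using left_idealD(1)[OF li] by blast
      show "\<zero> \<in> \<Union>C" using left_idealD(2)[OF li[OF K0]] K0 by blast
      show "\<And>x. x \<in> \<Union>C \<Longrightarrow> \<ominus> x \<in> \<Union>C" using left_idealD(4)[OF li] by blast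
      show "\<And>r x. r \<in> carrier R \<Longrightarrow> x \<in> \<Union>C \<Longrightarrow> r \<otimes> x \<in> \<Union>C" using left_idealD(5)[OF li] by blast
      fix x y assume "x \<in> \<Union>C" "y \<in> \<Union>C"
      then obtain K K2 where "K \<in> C" "K2 \<in> C" "x \<in> K" "y \<in> K2" by blast
      then show "x \<oplus> y \<in> \<Union>C" using cmp[of K K2] left_idealD(3)[OF li] by blast
    qed
    moreover have "L0 \<subseteq> \<Union>C" using K0 CA unfolding A_def by blast
    moreover have "\<one> \<notin> \<Union>C" using CA unfolding A_def by blast
    ultimately show "\<Union>C \<in> A" unfolding A_def by blast
  qed
  then obtain M where MA: "M \<in> A" and mx: "\<And>K. K \<in> A \<Longrightarrow> M \<subseteq> K \<Longrightarrow> K = M" by blast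
  have "maximal_left_ideal M R"
    unfolding maximal_left_ideal_def
  proof (intro conjI allI impI)
    show "left_ideal M R" using MA unfolding A_def by blast
    show "M \<noteq> carrier R" using MA unfolding A_def by auto
    fix L assume L: "left_ideal L R" "M \<subseteq> L"
    show "L = M \<or> L = carrier R"
    proof (cases "\<one> \<in> L")
      case True then show ?thesis using left_ideal_one[OF L(1)] by blast
    next
      case False then have "L \<in> A" using L MA unfolding A_def by blast
      then show ?thesis using mx L by blast
    qed
  qed
  then show ?thesis using MA unfolding A_def by blast
qed

lemma J_carrier: "jacobson_radical R \<subseteq> carrier R"
  unfolding jacobson_radical_def by blast

lemma J_left: "x \<in> jacobson_radical R \<Longrightarrow> r \<in> carrier R \<Longrightarrow> r \<otimes> x \<in> jacobson_radical R"
  unfolding jacobson_radical_def maximal_left_ideal_def using left_idealD(5) by auto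

lemma J_unit:
  assumes y: "y \<in> jacobson_radical R"
  shows "\<exists>u\<in>carrier R. u \<otimes> (\<one> \<oplus> y) = \<one>"
proof (rule ccontr)
  assume nu: "\<not> ?thesis"
  have yc: "y \<in> carrier R" using y J_carrier by blast
  define w where "w = \<one> \<oplus> y"
  have wc: "w \<in> carrier R" unfolding w_def using yc by simp
  define L where "L = {r \<otimes> w | r. r \<in> carrier R}"
  have "left_ideal L R"
  proof (rule left_idealI)
    show "L \<subseteq> carrier R" unfolding L_def using wc by auto
    show "\<zero> \<in> L" unfolding L_def using wc by (auto intro!: exI[of _ \<zero>])
    show "x \<oplus> z \<in> L" if "x \<in> L" "z \<in> L" for x z
      using that wc unfolding L_def by (auto simp: l_distr[symmetric])
    show "\<ominus> x \<in> L" if "x \<in> L" for x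
      using that wc unfolding L_def by (auto simp: l_minus[symmetric])
    show "r \<otimes> x \<in> L" if "r \<in> carrier R" "x \<in> L" for r x
      using that wc unfolding L_def by (auto simp: m_assoc[symmetric])
  qed
  moreover have "\<one> \<notin> L" using nu unfolding L_def w_def by auto
  ultimately obtain M where M: "maximal_left_ideal M R" and LM: "L \<subseteq> M"
    using exists_maximal_left_ideal by blast
  have Ml: "left_ideal M R" using M unfolding maximal_left_ideal_def by blast
  have "y \<in> M" using y M unfolding jacobson_radical_def by blast
  moreover have "w \<in> M" using LM wc unfolding L_def by (force intro!: exI[of _ \<one>])
  ultimately have "w \<oplus> \<ominus> y \<in> M" using left_idealD(3,4)[OF Ml] by blast
  moreover have "w \<oplus> \<ominus> y = \<one>" unfolding w_def using yc by algebra
  ultimately have "M = carrier R" using left_ideal_one[OF Ml] by simp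
  then show False using M unfolding maximal_left_ideal_def by blast
qed

lemma J_char:
  assumes x: "x \<in> carrier R" and h: "\<And>r. r \<in> carrier R \<Longrightarrow> \<exists>u\<in>carrier R. u \<otimes> (\<one> \<oplus> r \<otimes> x) = \<one>"
  shows "x \<in> jacobson_radical R"
  unfolding jacobson_radical_def
proof (intro CollectI conjI allI impI x)
  fix M assume M: "maximal_left_ideal M R"
  have Ml: "left_ideal M R" using M unfolding maximal_left_ideal_def by blast
  show "x \<in> M"
  proof (rule ccontr)
    assume xM: "x \<notin> M"
    define L where "L = {m \<oplus> r \<otimes> x | m r. m \<in> M \<and> r \<in> carrier R}"
    note D = left_idealD[OF Ml]
    have "left_ideal L R"
    proof (rule left_idealI)
      show "L \<subseteq> carrier R" unfolding L_def using x D(1) by auto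
      show "\<zero> \<in> L" unfolding L_def using x D(2) by (force intro!: exI[of _ \<zero>])
      show "a \<oplus> b \<in> L" if ab: "a \<in> L" "b \<in> L" for a b
      proof -
        obtain m r m' r' where "a = m \<oplus> r \<otimes> x" "b = m' \<oplus> r' \<otimes> x" "m \<in> M" "m' \<in> M"
          "r \<in> carrier R" "r' \<in> carrier R" using ab unfolding L_def by blast
        moreover then have "m \<in> carrier R" "m' \<in> carrier R" using D(1) by auto
        moreover note calculation
        moreover have "m \<oplus> r \<otimes> x \<oplus> (m' \<oplus> r' \<otimes> x) = (m \<oplus> m') \<oplus> (r \<oplus> r') \<otimes> x"
          using x calculation by (simp add: l_distr a_ac)
        ultimately show ?thesis unfolding L_def using D(3) by auto
      qed
      show "\<ominus> a \<in> L" if ab: "a \<in> L" for a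
      proof -
        obtain m r where "a = m \<oplus> r \<otimes> x" "m \<in> M" "r \<in> carrier R"
          using ab unfolding L_def by blast
        moreover then have "\<ominus> (m \<oplus> r \<otimes> x) = (\<ominus> m) \<oplus> (\<ominus> r) \<otimes> x"
          using x D(1) by (simp add: l_minus minus_add subset_iff)
        ultimately show ?thesis unfolding L_def using D(4) by auto
      qed
      show "t \<otimes> a \<in> L" if ab: "t \<in> carrier R" "a \<in> L" for t a
      proof -
        obtain m r where "a = m \<oplus> r \<otimes> x" "m \<in> M" "r \<in> carrier R"
          using ab unfolding L_def by blast
        moreover then have "t \<otimes> (m \<oplus> r \<otimes> x) = (t \<otimes> m) \<oplus> (t \<otimes> r) \<otimes> x"
          using x D(1) ab by (simp add: r_distr m_assoc subset_iff)
        ultimately show ?thesis unfolding L_def using D(5) ab by auto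
      qed
    qed
    moreover have "M \<subseteq> L"
    proof
      fix m assume mM: "m \<in> M"
      then have "m \<in> carrier R" using D(1) by blast
      then have "m = m \<oplus> \<zero> \<otimes> x" using x by simp
      then show "m \<in> L" unfolding L_def using mM by blast
    qed
    moreover have "x \<in> L"
    proof -
      have "x = \<zero> \<oplus> \<one> \<otimes> x" using x by simp
      then show ?thesis unfolding L_def using D(2) by blast
    qed
    ultimately have "L = carrier R" using M xM unfolding maximal_left_ideal_def by blast
    then have "\<one> \<in> L" by simp
    then obtain m r where mr: "\<one> = m \<oplus> r \<otimes> x" "m \<in> M" "r \<in> carrier R" unfolding L_def by blast
    have mc: "m \<in> carrier R" using mr D(1) by blast
    have "m = \<one> \<oplus> (\<ominus> r) \<otimes> x" using mr(1) mc mr(3) x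
      by (metis a_assoc add.inv_closed l_minus l_zero m_closed one_closed r_neg r_zero minus_minus)
    then obtain u where u: "u \<in> carrier R" "u \<otimes> m = \<one>" using h[of "\<ominus> r"] mr(3) by auto
    then have "\<one> \<in> M" using D(5) mr(2) by metis
    then show False using left_ideal_one[OF Ml] M unfolding maximal_left_ideal_def by blast
  qed
qed


lemma one_minus_nil_unit:
  assumes x: "x \<in> carrier R" and n: "x [^] (n::nat) = \<zero>"
  shows "\<one> \<ominus> x \<in> Units R"
proof -
  define PX :: "int poly" where "PX = [:0,1:]"
  define G :: "int poly" where "G = (\<Sum>i<n. PX^i)"
  have pe: "(1 - PX) * G = 1 - PX^n" unfolding G_def by (simp add: one_diff_power_eq)
  have pX: "pev x PX = x" unfolding PX_def using x by (rule pev_X)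
  have v: "pev x (1 - PX^n) = \<one>" using x n by (simp add: pev_diff pev_power pX minus_eq)
  have gc: "pev x G \<in> carrier R" using x by simp
  have "(\<one> \<ominus> x) \<otimes> pev x G = \<one>"
    using v unfolding pe[symmetric] using x by (simp add: pev_mult pev_diff pX)
  moreover have "pev x G \<otimes> (\<one> \<ominus> x) = \<one>"
    using v unfolding pe[symmetric] mult.commute[of "1 - PX"] using x by (simp add: pev_mult pev_diff pX)
  ultimately show ?thesis unfolding Units_def using x gc by auto
qed

lemma unit_lr:
  assumes a: "a \<in> carrier R" and l: "l \<in> carrier R" "l \<otimes> a = \<one>" and r: "r \<in> carrier R" "a \<otimes> r = \<one>"
  shows "a \<in> Units R"
proof -
  have "l = r" using a l r by (metis m_assoc r_one l_one)
  then show ?thesis unfolding Units_def using a l r by auto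
qed

lemma pow_left_inv:
  assumes u: "u \<in> carrier R" and w: "w \<in> carrier R" and uw: "u \<otimes> w = \<one>"
  shows "u [^] (k::nat) \<otimes> w [^] k = \<one>"
proof (induct k)
  case (Suc k)
  have "w [^] Suc k = w \<otimes> w [^] k" using w by (simp only: nat_pow_Suc2)
  then have "u [^] Suc k \<otimes> w [^] Suc k = u [^] k \<otimes> (u \<otimes> w) \<otimes> w [^] k"
    using u w by (simp add: m_assoc del: nat_pow_Suc)
  also have "\<dots> = \<one>" using Suc uw u w by simp
  finally show ?case .
qed simp

lemma nil_from_unit_factor:
  assumes x: "x \<in> carrier R" and w: "w \<in> carrier R" and u: "u \<in> carrier R" and uw: "u \<otimes> w = \<one>"
    and cm: "w \<otimes> x = x \<otimes> w" and n: "(w \<otimes> x) [^] (n::nat) = \<zero>"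
  shows "x [^] n = \<zero>"
proof -
  have "x [^] n = (u [^] n \<otimes> w [^] n) \<otimes> x [^] n" using pow_left_inv[OF u w uw] x by simp
  also have "\<dots> = u [^] n \<otimes> (w \<otimes> x) [^] n" using u w x pow_mult_distrib[OF cm w x] by (simp add: m_assoc)
  also have "\<dots> = \<zero>" using n u by simp
  finally show ?thesis .
qed

lemma J_right:
  assumes x: "x \<in> jacobson_radical R" and s: "s \<in> carrier R"
  shows "x \<otimes> s \<in> jacobson_radical R"
proof (rule J_char)
  have xc: "x \<in> carrier R" using x J_carrier by blast
  show "x \<otimes> s \<in> carrier R" using xc s by simp
  fix r assume r: "r \<in> carrier R"
  define A where "A = r \<otimes> x"
  have Ac: "A \<in> carrier R" unfolding A_def using r xc by simp
  have "s \<otimes> A \<in> jacobson_radical R" unfolding A_def using J_left[OF J_left[OF x r] s] .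
  then obtain w where w: "w \<in> carrier R" "w \<otimes> (\<one> \<oplus> s \<otimes> A) = \<one>" using J_unit by blast
  define u where "u = \<one> \<ominus> A \<otimes> w \<otimes> s"
  have uc: "u \<in> carrier R" unfolding u_def using Ac w s by simp
  have "u \<otimes> (\<one> \<oplus> A \<otimes> s) = \<one> \<oplus> A \<otimes> s \<ominus> A \<otimes> (w \<otimes> (\<one> \<oplus> s \<otimes> A)) \<otimes> s"
    unfolding u_def using Ac w(1) s by (algebra, simp)
  also have "\<dots> = \<one>" unfolding w(2) using Ac s by algebra
  finally have "u \<otimes> (\<one> \<oplus> r \<otimes> (x \<otimes> s)) = \<one>" unfolding A_def using r xc s by (simp add: m_assoc)
  then show "\<exists>u\<in>carrier R. u \<otimes> (\<one> \<oplus> r \<otimes> (x \<otimes> s)) = \<one>" using uc by blast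
qed

lemma J_ideal: "ideal (jacobson_radical R) R"
proof (rule idealI)
  show "ring R" by (rule ring_axioms)
  show "subgroup (jacobson_radical R) (add_monoid R)"
  proof (rule add.subgroupI)
    show "jacobson_radical R \<subseteq> carrier R" by (rule J_carrier)
    have "\<zero> \<in> jacobson_radical R"
      unfolding jacobson_radical_def maximal_left_ideal_def using left_idealD(2) by auto
    then show "jacobson_radical R \<noteq> {}" by blast
    show "\<ominus> a \<in> jacobson_radical R" if "a \<in> jacobson_radical R" for a
      using that unfolding jacobson_radical_def maximal_left_ideal_def using left_idealD(4) by auto
    show "a \<oplus> b \<in> jacobson_radical R" if "a \<in> jacobson_radical R" "b \<in> jacobson_radical R" for a b
      using that unfolding jacobson_radical_def maximal_left_ideal_def using left_idealD(3) by auto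
  qed
  show "x \<otimes> a \<in> jacobson_radical R" if "a \<in> jacobson_radical R" "x \<in> carrier R" for a x
    using J_left that by blast
  show "a \<otimes> x \<in> jacobson_radical R" if "a \<in> jacobson_radical R" "x \<in> carrier R" for a x
    using J_right that by blast
qed

lemma GSWNC_J_nil:
  assumes g: "GSWNC R"
  shows "nil_set R (jacobson_radical R)"
  unfolding nil_set_def
proof
  fix x assume x: "x \<in> jacobson_radical R"
  have xc: "x \<in> carrier R" using x J_carrier by blast
  show "nilpotent_elem R x"
  proof (cases "x \<in> Units R")
    case True
    have "(\<ominus> (inv x)) \<otimes> x \<in> jacobson_radical R" using J_left[OF x] True by simp
    then obtain u where u: "u \<in> carrier R" "u \<otimes> (\<one> \<oplus> (\<ominus> (inv x)) \<otimes> x) = \<one>" using J_unit by blast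
    have "(\<ominus> (inv x)) \<otimes> x = \<ominus> \<one>" using True xc by (simp add: l_minus)
    then have "\<one> = \<zero>" using u by (simp add: r_neg)
    then have "x = \<zero>" using xc by (metis r_one r_null)
    then have "x [^] (1::nat) = \<zero>" by simp
    then show ?thesis using xc unfolding nilpotent_elem_def by blast
  next
    case False
    then have "strongly_weakly_nil_clean R x" using g xc unfolding GSWNC_def by blast
    then have "(\<exists>n::nat. (x \<ominus> x \<otimes> x) [^] n = \<zero>) \<or> (\<exists>n::nat. (x \<oplus> x \<otimes> x) [^] n = \<zero>)"
      using swnc_imp_nil xc by blast
    then show ?thesis
    proof
      assume "\<exists>n::nat. (x \<ominus> x \<otimes> x) [^] n = \<zero>"
      then obtain n where n: "(x \<ominus> x \<otimes> x) [^] (n::nat) = \<zero>" by blast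
      have "(\<ominus> \<one>) \<otimes> x \<in> jacobson_radical R" using J_left[OF x] by simp
      then obtain u where u: "u \<in> carrier R" "u \<otimes> (\<one> \<oplus> (\<ominus> \<one>) \<otimes> x) = \<one>" using J_unit by blast
      define w where "w = \<one> \<ominus> x"
      have wc: "w \<in> carrier R" unfolding w_def using xc by simp
      have uw: "u \<otimes> w = \<one>" using u xc unfolding w_def by (simp add: l_minus minus_eq)
      have cm: "w \<otimes> x = x \<otimes> w" unfolding w_def using xc by (algebra, simp?)
      have "w \<otimes> x = x \<ominus> x \<otimes> x" unfolding w_def using xc by (algebra, simp?)
      then have "x [^] n = \<zero>" using nil_from_unit_factor[OF xc wc u(1) uw cm] n by simp
      then show ?thesis using xc unfolding nilpotent_elem_def by blast
    next
      assume "\<exists>n::nat. (x \<oplus> x \<otimes> x) [^] n = \<zero>"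
      then obtain n where n: "(x \<oplus> x \<otimes> x) [^] (n::nat) = \<zero>" by blast
      obtain u where u: "u \<in> carrier R" "u \<otimes> (\<one> \<oplus> x) = \<one>" using J_unit[OF x] by blast
      define w where "w = \<one> \<oplus> x"
      have wc: "w \<in> carrier R" unfolding w_def using xc by simp
      have uw: "u \<otimes> w = \<one>" using u unfolding w_def by simp
      have cm: "w \<otimes> x = x \<otimes> w" unfolding w_def using xc by (algebra, simp?)
      have "w \<otimes> x = x \<oplus> x \<otimes> x" unfolding w_def using xc by (algebra, simp?)
      then have "x [^] n = \<zero>" using nil_from_unit_factor[OF xc wc u(1) uw cm] n by simp
      then show ?thesis using xc unfolding nilpotent_elem_def by blast
    qed
  qed
qed


lemma GSWNC_iff_nil_sq: "GSWNC R \<longleftrightarrow> (\<forall>a \<in> carrier R - Units R. nil_sq R a)"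
  unfolding GSWNC_def nil_sq_def using swnc_iff by auto

end

lemma quot_transfer:
  fixes R (structure)
  assumes R: "ring R" and I: "ideal I R" and nil: "nil_set R I"
  shows "GSWNC R \<longleftrightarrow> GSWNC (R Quot I)"
proof -
  interpret ideal I R by (rule I)
  interpret S: ring "R Quot I" by (rule quotient_is_ring)
  interpret h: ring_hom_ring R "R Quot I" "(+>) I" by (rule rcos_ring_hom_ring)
  have cq: "carrier (R Quot I) = (\<Union>a\<in>carrier R. {I +> a})"
    unfolding FactRing_def by (simp only: partial_object.select_convs A_RCOSETS_def')
  have surj: "\<And>Z. Z \<in> carrier (R Quot I) \<Longrightarrow> \<exists>a\<in>carrier R. Z = I +> a"
    unfolding cq by blast
  have hc: "\<And>a. a \<in> carrier R \<Longrightarrow> I +> a \<in> carrier (R Quot I)" by (rule h.hom_closed)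
  have z: "\<zero>\<^bsub>R Quot I\<^esub> = I" unfolding FactRing_def by (simp only: ring.select_convs)
  have ker: "\<And>a. a \<in> carrier R \<Longrightarrow> I +> a = \<zero>\<^bsub>R Quot I\<^esub> \<Longrightarrow> a \<in> I"
  proof -
    fix a assume a: "a \<in> carrier R" and e: "I +> a = \<zero>\<^bsub>R Quot I\<^esub>"
    have "a \<in> I +> a" using a by (force simp: a_r_coset_def')
    then show "a \<in> I" using e z by simp
  qed
  have hsub: "\<And>a b. a \<in> carrier R \<Longrightarrow> b \<in> carrier R \<Longrightarrow> I +> (a \<ominus> b) = (I +> a) \<ominus>\<^bsub>R Quot I\<^esub> (I +> b)"
    by (simp add: minus_eq S.minus_eq)
  have nilt: "\<And>y. y \<in> carrier R \<Longrightarrow> (\<exists>n::nat. (I +> y) [^]\<^bsub>R Quot I\<^esub> n = \<zero>\<^bsub>R Quot I\<^esub>) \<longleftrightarrow> (\<exists>n::nat. y [^] n = \<zero>)"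
  proof -
    fix y assume y: "y \<in> carrier R"
    show "(\<exists>n::nat. (I +> y) [^]\<^bsub>R Quot I\<^esub> n = \<zero>\<^bsub>R Quot I\<^esub>) \<longleftrightarrow> (\<exists>n::nat. y [^] n = \<zero>)"
    proof
      assume "\<exists>n::nat. (I +> y) [^]\<^bsub>R Quot I\<^esub> n = \<zero>\<^bsub>R Quot I\<^esub>"
      then obtain n where "(I +> y) [^]\<^bsub>R Quot I\<^esub> (n::nat) = \<zero>\<^bsub>R Quot I\<^esub>" by blast
      then have "I +> (y [^] n) = \<zero>\<^bsub>R Quot I\<^esub>" using y by (simp add: h.hom_nat_pow)
      then have "y [^] n \<in> I" using ker y by simp
      then obtain m where "(y [^] n) [^] (m::nat) = \<zero>" using nil unfolding nil_set_def nilpotent_elem_def by blast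
      then have "y [^] (n * m) = \<zero>" using y by (simp add: nat_pow_pow)
      then show "\<exists>n::nat. y [^] n = \<zero>" by blast
    next
      assume "\<exists>n::nat. y [^] n = \<zero>"
      then obtain n where "y [^] (n::nat) = \<zero>" by blast
      then have "(I +> y) [^]\<^bsub>R Quot I\<^esub> n = \<zero>\<^bsub>R Quot I\<^esub>" using y by (simp add: h.hom_nat_pow[symmetric])
      then show "\<exists>n::nat. (I +> y) [^]\<^bsub>R Quot I\<^esub> n = \<zero>\<^bsub>R Quot I\<^esub>" by blast
    qed
  qed
  have nsq: "\<And>a. a \<in> carrier R \<Longrightarrow> nil_sq (R Quot I) (I +> a) \<longleftrightarrow> nil_sq R a"
  proof -
    fix a assume a: "a \<in> carrier R"
    have e1: "(I +> a) \<ominus>\<^bsub>R Quot I\<^esub> (I +> a) \<otimes>\<^bsub>R Quot I\<^esub> (I +> a) = I +> (a \<ominus> a \<otimes> a)"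
      using a by (simp add: hsub)
    have e2: "(I +> a) \<oplus>\<^bsub>R Quot I\<^esub> (I +> a) \<otimes>\<^bsub>R Quot I\<^esub> (I +> a) = I +> (a \<oplus> a \<otimes> a)"
      using a by simp
    show "nil_sq (R Quot I) (I +> a) \<longleftrightarrow> nil_sq R a"
      unfolding nil_sq_def e1 e2 using nilt[of "a \<ominus> a \<otimes> a"] nilt[of "a \<oplus> a \<otimes> a"] a by simp
  qed
  have un1: "\<And>a. a \<in> Units R \<Longrightarrow> I +> a \<in> Units (R Quot I)"
  proof -
    fix a assume a: "a \<in> Units R"
    then obtain b where b: "b \<in> carrier R" "b \<otimes> a = \<one>" "a \<otimes> b = \<one>" unfolding Units_def by blast
    have ac: "a \<in> carrier R" using a by blast
    have "(I +> b) \<otimes>\<^bsub>R Quot I\<^esub> (I +> a) = \<one>\<^bsub>R Quot I\<^esub>" using b ac by (simp flip: h.hom_mult)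
    moreover have "(I +> a) \<otimes>\<^bsub>R Quot I\<^esub> (I +> b) = \<one>\<^bsub>R Quot I\<^esub>" using b ac by (simp flip: h.hom_mult)
    ultimately show "I +> a \<in> Units (R Quot I)" unfolding Units_def using hc b ac by blast
  qed
  have un2: "\<And>a. a \<in> carrier R \<Longrightarrow> I +> a \<in> Units (R Quot I) \<Longrightarrow> a \<in> Units R"
  proof -
    fix a assume ac: "a \<in> carrier R" and u: "I +> a \<in> Units (R Quot I)"
    then obtain Y where Y: "Y \<in> carrier (R Quot I)" "Y \<otimes>\<^bsub>R Quot I\<^esub> (I +> a) = \<one>\<^bsub>R Quot I\<^esub>"
       "(I +> a) \<otimes>\<^bsub>R Quot I\<^esub> Y = \<one>\<^bsub>R Quot I\<^esub>" unfolding Units_def by blast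
    obtain b where b: "b \<in> carrier R" "Y = I +> b" using surj Y(1) by blast
    have unit_of: "c \<in> Units R" if c: "c \<in> carrier R" "I +> c = \<one>\<^bsub>R Quot I\<^esub>" for c
    proof -
      have "I +> (\<one> \<ominus> c) = \<zero>\<^bsub>R Quot I\<^esub>" using c by (simp add: hsub)
      then have "\<one> \<ominus> c \<in> I" using ker c by simp
      then obtain n where "(\<one> \<ominus> c) [^] (n::nat) = \<zero>" using nil unfolding nil_set_def nilpotent_elem_def by blast
      then have "\<one> \<ominus> (\<one> \<ominus> c) \<in> Units R" using one_minus_nil_unit c by simp
      moreover have "\<one> \<ominus> (\<one> \<ominus> c) = c" using c by algebra
      ultimately show ?thesis by simp
    qed
    have ba: "b \<otimes> a \<in> Units R" using unit_of[of "b \<otimes> a"] Y b ac by simp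
    have ab: "a \<otimes> b \<in> Units R" using unit_of[of "a \<otimes> b"] Y b ac by simp
    have "(inv (b \<otimes> a) \<otimes> b) \<otimes> a = \<one>" using ba b ac by (simp add: m_assoc)
    moreover have "a \<otimes> (b \<otimes> inv (a \<otimes> b)) = \<one>" using ab b ac by (simp flip: m_assoc)
    ultimately show "a \<in> Units R" using unit_lr[OF ac, of "inv (b \<otimes> a) \<otimes> b" "b \<otimes> inv (a \<otimes> b)"] ba ab b by simp
  qed
  show ?thesis
    unfolding GSWNC_iff_nil_sq S.GSWNC_iff_nil_sq
  proof
    assume g: "\<forall>a\<in>carrier R - Units R. nil_sq R a"
    show "\<forall>Z\<in>carrier (R Quot I) - Units (R Quot I). nil_sq (R Quot I) Z"
    proof
      fix Z assume Z: "Z \<in> carrier (R Quot I) - Units (R Quot I)"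
      then obtain a where a: "a \<in> carrier R" "Z = I +> a" using surj by blast
      have "a \<notin> Units R" using un1 Z a by blast
      then show "nil_sq (R Quot I) Z" using g a nsq by blast
    qed
  next
    assume g: "\<forall>Z\<in>carrier (R Quot I) - Units (R Quot I). nil_sq (R Quot I) Z"
    show "\<forall>a\<in>carrier R - Units R. nil_sq R a"
    proof
      fix a assume a: "a \<in> carrier R - Units R"
      then have "I +> a \<notin> Units (R Quot I)" using un2 by blast
      then show "nil_sq R a" using g a nsq hc by blast
    qed
  qed
qed

theorem proposition2p13:
  fixes R :: "('a, 'b) ring_scheme"
  assumes "ring R"
  shows "(\<forall>I. nil_ideal I R \<longrightarrow> (GSWNC R \<longleftrightarrow> GSWNC (R Quot I)))
       \<and> (GSWNC R \<longleftrightarrow>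
            nil_set R (jacobson_radical R) \<and> GSWNC (R Quot (jacobson_radical R)))"
proof -
  interpret ring R by fact
  have i: "\<forall>I. nil_ideal I R \<longrightarrow> (GSWNC R \<longleftrightarrow> GSWNC (R Quot I))"
    using quot_transfer[OF assms] unfolding nil_ideal_def by blast
  have J: "ideal (jacobson_radical R) R" by (rule J_ideal)
  show ?thesis
  proof (rule conjI[OF i], rule iffI)
    assume g: "GSWNC R"
    then have n: "nil_set R (jacobson_radical R)" by (rule GSWNC_J_nil)
    then show "nil_set R (jacobson_radical R) \<and> GSWNC (R Quot jacobson_radical R)"
      using quot_transfer[OF assms J n] g by blast
  next
    assume "nil_set R (jacobson_radical R) \<and> GSWNC (R Quot jacobson_radical R)"
    then show "GSWNC R" using quot_transfer[OF assms J] by blast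
  qed
qed

end
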